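(* Let $n\ge 1$ and $d\ge 2$ be integers. Consider the $(n,d)$ random access code task: Alice receives a string $x=x_1x_2\cdots x_n$ with each $x_i\in\{1,\dots,d\}$, drawn uniformly from all $d^n$ strings; Bob receives $y\in\{1,\dots,n\}$ uniformly at random and outputs $z\in\{1,\dots,d\}$. A classical protocol consists of an encoding, i.e. conditional probability distributions $p_e(m|x)$ over messages $m$ from a finite set of arbitrary size, and a decoding, i.e. conditional probability distributions $p_d(z|y,m)$; it yields $p(z|x,y)=\sum_m p_e(m|x)p_d(z|y,m)$. Its success metric is $$\mathcal{S}_C(n,d)=\frac{1}{n d^n}\sum_{x,y} p(z=x_y\,|\,x,y),$$ and its distinguishability is $$\mathcal{D}_C=\frac{1}{d^n}\sum_m \max_x p_e(m|x).$$ Then every classical protocol satisfies $$n\,\mathcal{S}_C(n,d)+1-n\le \mathcal{D}_C.$$ *)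

theory Defs
  imports Complex_Main
begin

text \<open>Strings x = x_1 ... x_n with letters in {1..d}, represented as lists of length n;
  x_y (for y in {1..n}) is xs ! (y - 1).\<close>
definition rac_strings :: "nat \<Rightarrow> nat \<Rightarrow> nat list set" where
  "rac_strings n d = {xs. length xs = n \<and> set xs \<subseteq> {1..d}}"

text \<open>A classical protocol with message set M: encoding pe x m = p_e(m|x),
  decoding pd y m z = p_d(z|y,m); both conditional probability distributions.\<close>
definition classical_protocol ::
  "nat \<Rightarrow> nat \<Rightarrow> 'm set \<Rightarrow> (nat list \<Rightarrow> 'm \<Rightarrow> real) \<Rightarrow> (nat \<Rightarrow> 'm \<Rightarrow> nat \<Rightarrow> real) \<Rightarrow> bool" where
  "classical_protocol n d M pe pd \<longleftrightarrow>
     finite M \<and>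
     (\<forall>x\<in>rac_strings n d. (\<forall>m\<in>M. pe x m \<ge> 0) \<and> (\<Sum>m\<in>M. pe x m) = 1) \<and>
     (\<forall>y\<in>{1..n}. \<forall>m\<in>M. (\<forall>z\<in>{1..d}. pd y m z \<ge> 0) \<and> (\<Sum>z\<in>{1..d}. pd y m z) = 1)"

definition rac_prob ::
  "'m set \<Rightarrow> (nat list \<Rightarrow> 'm \<Rightarrow> real) \<Rightarrow> (nat \<Rightarrow> 'm \<Rightarrow> nat \<Rightarrow> real) \<Rightarrow> nat \<Rightarrow> nat list \<Rightarrow> nat \<Rightarrow> real" where
  "rac_prob M pe pd z x y = (\<Sum>m\<in>M. pe x m * pd y m z)"

definition success_C ::
  "nat \<Rightarrow> nat \<Rightarrow> 'm set \<Rightarrow> (nat list \<Rightarrow> 'm \<Rightarrow> real) \<Rightarrow> (nat \<Rightarrow> 'm \<Rightarrow> nat \<Rightarrow> real) \<Rightarrow> real" where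
  "success_C n d M pe pd =
     1 / (real n * real d ^ n) *
     (\<Sum>x\<in>rac_strings n d. \<Sum>y\<in>{1..n}. rac_prob M pe pd (x ! (y - 1)) x y)"

definition distinguishability_C ::
  "nat \<Rightarrow> nat \<Rightarrow> 'm set \<Rightarrow> (nat list \<Rightarrow> 'm \<Rightarrow> real) \<Rightarrow> real" where
  "distinguishability_C n d M pe =
     1 / real d ^ n * (\<Sum>m\<in>M. Max ((\<lambda>x. pe x m) ` rac_strings n d))"

end

theory Submission
  imports Defs
begin

lemma weier:
  fixes a :: "nat \<Rightarrow> real"
  assumes "\<And>i. i < n \<Longrightarrow> 0 \<le> a i \<and> a i \<le> 1"
  shows "1 - (\<Sum>i<n. 1 - a i) \<le> (\<Prod>i<n. a i)"
  using assms
proof (induction n)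
  case 0 then show ?case by simp
next
  case (Suc n)
  have IH: "1 - (\<Sum>i<n. 1 - a i) \<le> (\<Prod>i<n. a i)" using Suc by auto
  have an: "0 \<le> a n" "a n \<le> 1" using Suc.prems by auto
  have S: "0 \<le> (\<Sum>i<n. 1 - a i)" using Suc.prems by (intro sum_nonneg) auto
  have "(1 - (\<Sum>i<n. 1 - a i)) * a n \<le> (\<Prod>i<n. a i) * a n"
    using IH an by (intro mult_right_mono) auto
  moreover have "1 - (\<Sum>i<n. 1 - a i) - (1 - a n) \<le> (1 - (\<Sum>i<n. 1 - a i)) * a n"
  proof -
    have "0 \<le> (1 - a n) * (\<Sum>i<n. 1 - a i)" using an S by simp
    then show ?thesis by (simp add: algebra_simps)
  qed
  ultimately show ?case by simp
qed

lemma rac_Suc: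
  "{xs. length xs = Suc n \<and> set xs \<subseteq> A} = (\<lambda>(a, xs). a # xs) ` (A \<times> {xs. length xs = n \<and> set xs \<subseteq> A})"
proof (rule set_eqI, rule iffI)
  fix xs assume "xs \<in> {xs. length xs = Suc n \<and> set xs \<subseteq> A}"
  then show "xs \<in> (\<lambda>(a, xs). a # xs) ` (A \<times> {xs. length xs = n \<and> set xs \<subseteq> A})"
    by (cases xs) (auto intro!: image_eqI[where x="(hd xs, tl xs)"])
qed auto

lemma sum_prod_lists:
  fixes p :: "nat \<Rightarrow> nat \<Rightarrow> real"
  shows "(\<Sum>x\<in>{xs. length xs = n \<and> set xs \<subseteq> A}. \<Prod>i<n. p i (x ! i)) = (\<Prod>i<n. \<Sum>z\<in>A. p i z)"
proof (induction n arbitrary: p)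
  case 0
  have "{xs. length xs = 0 \<and> set xs \<subseteq> A} = {[]}" by auto
  then show ?case by simp
next
  case (Suc n)
  have inj: "inj_on (\<lambda>(a, xs). a # xs) (A \<times> {xs. length xs = n \<and> set xs \<subseteq> A})"
    by (auto simp: inj_on_def)
  have "(\<Sum>x\<in>{xs. length xs = Suc n \<and> set xs \<subseteq> A}. \<Prod>i<Suc n. p i (x ! i))
      = (\<Sum>(a, xs)\<in>A \<times> {xs. length xs = n \<and> set xs \<subseteq> A}. \<Prod>i<Suc n. p i ((a # xs) ! i))"
    unfolding rac_Suc by (subst sum.reindex[OF inj]) (simp add: case_prod_unfold)
  also have "\<dots> = (\<Sum>a\<in>A. \<Sum>xs\<in>{xs. length xs = n \<and> set xs \<subseteq> A}. p 0 a * (\<Prod>i<n. p (Suc i) (xs ! i)))"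
    by (subst sum.cartesian_product[symmetric]) (simp add: prod.lessThan_Suc_shift del: prod.lessThan_Suc)
  also have "\<dots> = (\<Sum>a\<in>A. p 0 a * (\<Prod>i<n. \<Sum>z\<in>A. p (Suc i) z))"
    by (intro sum.cong refl, subst sum_distrib_left[symmetric], subst Suc.IH[of "\<lambda>i. p (Suc i)"], rule refl)
  also have "\<dots> = (\<Prod>i<Suc n. \<Sum>z\<in>A. p i z)"
    by (simp add: prod.lessThan_Suc_shift sum_distrib_right del: prod.lessThan_Suc)
  finally show ?case .
qed

theorem theorem1:
  fixes n d :: nat and M :: "'m set"
    and pe :: "nat list \<Rightarrow> 'm \<Rightarrow> real" and pd :: "nat \<Rightarrow> 'm \<Rightarrow> nat \<Rightarrow> real"
  assumes "n \<ge> 1" and "d \<ge> 2"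
    and "classical_protocol n d M pe pd"
  shows "real n * success_C n d M pe pd + 1 - real n \<le> distinguishability_C n d M pe"
proof -
  define R where "R = rac_strings n d"
  define N where "N = real d ^ n"
  have finM: "finite M" and pe_nn: "\<And>x m. x \<in> R \<Longrightarrow> m \<in> M \<Longrightarrow> pe x m \<ge> 0"
    and pe_sum: "\<And>x. x \<in> R \<Longrightarrow> (\<Sum>m\<in>M. pe x m) = 1"
    and pd_nn: "\<And>y m z. y \<in> {1..n} \<Longrightarrow> m \<in> M \<Longrightarrow> z \<in> {1..d} \<Longrightarrow> pd y m z \<ge> 0"
    and pd_sum: "\<And>y m. y \<in> {1..n} \<Longrightarrow> m \<in> M \<Longrightarrow> (\<Sum>z\<in>{1..d}. pd y m z) = 1"
    using assms(3) unfolding classical_protocol_def R_def by auto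
  have finR: "finite R" unfolding R_def rac_strings_def
    using finite_lists_length_eq[of "{1..d}" n] by (simp add: conj_commute)
  have cardR: "card R = d ^ n" unfolding R_def rac_strings_def
    using card_lists_length_eq[of "{1..d}" n] by (simp add: conj_commute)
  have neR: "R \<noteq> {}" unfolding R_def rac_strings_def using assms(2)
    by (auto intro!: exI[where x="replicate n 1"])
  have Npos: "N > 0" unfolding N_def using assms(2) by simp
  have RN: "(\<Sum>x\<in>R. (1::real)) = N" using cardR unfolding N_def by simp
  define Q where "Q m = Max ((\<lambda>x. pe x m) ` R)" for m
  define g where "g m x = (\<Sum>i<n. pd (Suc i) m (x ! i))" for m x
  have xin: "x ! i \<in> {1..d}" if "x \<in> R" "i < n" for x i
    using that unfolding R_def rac_strings_def by (auto simp: subset_iff)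
  have pd01: "0 \<le> pd (Suc i) m (x ! i) \<and> pd (Suc i) m (x ! i) \<le> 1"
    if "x \<in> R" "i < n" "m \<in> M" for x i m
  proof -
    have y: "Suc i \<in> {1..n}" using that by auto
    have "pd (Suc i) m (x ! i) \<le> (\<Sum>z\<in>{1..d}. pd (Suc i) m z)"
      by (rule member_le_sum) (use xin[OF that(1,2)] pd_nn[OF y that(3)] in auto)
    then show ?thesis using pd_sum[OF y that(3)] pd_nn[OF y that(3) xin[OF that(1,2)]] by simp
  qed
  have keym: "(\<Sum>x\<in>R. pe x m * g m x) - (real n - 1) * (\<Sum>x\<in>R. pe x m) \<le> Q m" if m: "m \<in> M" for m
  proof -
    have "(\<Sum>x\<in>R. pe x m * g m x) - (real n - 1) * (\<Sum>x\<in>R. pe x m)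
        = (\<Sum>x\<in>R. pe x m * (1 - (\<Sum>i<n. 1 - pd (Suc i) m (x ! i))))"
      by (simp add: g_def sum_distrib_left sum_distrib_right sum_subtractf algebra_simps
          sum.distrib[symmetric])
    also have "\<dots> \<le> (\<Sum>x\<in>R. pe x m * (\<Prod>i<n. pd (Suc i) m (x ! i)))"
      by (intro sum_mono mult_left_mono weier pd01 pe_nn m) auto
    also have "\<dots> \<le> (\<Sum>x\<in>R. Q m * (\<Prod>i<n. pd (Suc i) m (x ! i)))"
      by (intro sum_mono mult_right_mono prod_nonneg)
        (auto simp: Q_def intro!: Max_ge finR pd01[THEN conjunct1] m)
    also have "\<dots> = Q m * (\<Prod>i<n. \<Sum>z\<in>{1..d}. pd (Suc i) m z)"
      unfolding sum_distrib_left[symmetric] R_def rac_strings_def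
      by (rule arg_cong[where f="(*) (Q m)"], rule sum_prod_lists[where p="\<lambda>i. pd (Suc i) m"])
    also have "\<dots> = Q m" using pd_sum m by simp
    finally show ?thesis .
  qed
  have T: "(\<Sum>x\<in>R. \<Sum>y\<in>{1..n}. rac_prob M pe pd (x ! (y - 1)) x y)
      = (\<Sum>m\<in>M. \<Sum>x\<in>R. pe x m * g m x)"
  proof -
    have e1: "(\<Sum>y\<in>{1..n}. rac_prob M pe pd (x ! (y - 1)) x y)
        = (\<Sum>m\<in>M. pe x m * g m x)" for x
    proof -
      have "(\<Sum>y\<in>{1..n}. rac_prob M pe pd (x ! (y - 1)) x y)
          = (\<Sum>i<n. rac_prob M pe pd (x ! i) x (Suc i))"
        using sum.atLeast1_atMost_eq[of "\<lambda>y. rac_prob M pe pd (x ! (y - 1)) x y" n] by simp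
      also have "\<dots> = (\<Sum>i<n. \<Sum>m\<in>M. pe x m * pd (Suc i) m (x ! i))"
        by (simp add: rac_prob_def)
      also have "\<dots> = (\<Sum>m\<in>M. \<Sum>i<n. pe x m * pd (Suc i) m (x ! i))"
        by (rule sum.swap)
      also have "\<dots> = (\<Sum>m\<in>M. pe x m * g m x)"
        by (simp only: g_def sum_distrib_left)
      finally show ?thesis .
    qed
    have "(\<Sum>x\<in>R. \<Sum>y\<in>{1..n}. rac_prob M pe pd (x ! (y - 1)) x y)
        = (\<Sum>x\<in>R. \<Sum>m\<in>M. pe x m * g m x)"
      by (rule sum.cong[OF refl], rule e1)
    also have "\<dots> = (\<Sum>m\<in>M. \<Sum>x\<in>R. pe x m * g m x)"
      by (rule sum.swap)
    finally show ?thesis .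
  qed
  have sumpe: "(\<Sum>m\<in>M. \<Sum>x\<in>R. pe x m) = N"
  proof -
    have "(\<Sum>m\<in>M. \<Sum>x\<in>R. pe x m) = (\<Sum>x\<in>R. \<Sum>m\<in>M. pe x m)"
      by (rule sum.swap)
    also have "\<dots> = (\<Sum>x\<in>R. (1::real))"
      using pe_sum by (intro sum.cong) auto
    finally show ?thesis using RN by simp
  qed
  have "(\<Sum>m\<in>M. (\<Sum>x\<in>R. pe x m * g m x) - (real n - 1) * (\<Sum>x\<in>R. pe x m)) \<le> (\<Sum>m\<in>M. Q m)"
    by (intro sum_mono keym)
  then have Tle: "(\<Sum>m\<in>M. \<Sum>x\<in>R. pe x m * g m x) \<le> (\<Sum>m\<in>M. Q m) + (real n - 1) * N"
    by (simp add: sum_subtractf sum_distrib_left[symmetric] sumpe)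
  have "real n * success_C n d M pe pd = (\<Sum>m\<in>M. \<Sum>x\<in>R. pe x m * g m x) / N"
    unfolding success_C_def T[unfolded R_def] using assms(1)
    by (simp add: N_def R_def)
  also have "\<dots> \<le> ((\<Sum>m\<in>M. Q m) + (real n - 1) * N) / N"
    using Tle Npos by (simp add: divide_right_mono)
  also have "\<dots> = distinguishability_C n d M pe + real n - 1"
    unfolding distinguishability_C_def Q_def R_def N_def using Npos[unfolded N_def]
    by (simp add: field_simps)
  finally show ?thesis by simp
qed

end
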